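(* Let $\{\Omega_i\}_{i\ge0}$ be a contracting family of open subsets of $\mathbb{R}^2$, let $0<\eta<1$, and let $\{E_i\}_{i\ge0}$ be measurable sets with $E_i\subset\Omega_i$ and $|E_i|\ge\eta|\Omega_i|$ for all $i\ge0$. Then for every $A\subset\{0,1,2,\dots\}$, \[\sum_{i\in A}|E_i|\lesssim_\eta\Big|\bigcup_{i\in A}E_i\Big|,\] with implicit constant depending only on $\eta$.
   Context: A sequence of open sets $\{\Omega_i\}_{i\ge0}$ of finite measure is called contracting if $\Omega_{i+1}\subset\Omega_i$ and $|\Omega_{i+1}|\le\frac12|\Omega_i|$ for all $i\ge0$. *)

theory Defs
  imports "HOL-Analysis.Analysis"
begin

definition contracting :: "(nat \<Rightarrow> 'a::euclidean_space set) \<Rightarrow> bool" where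
  "contracting \<Omega> \<longleftrightarrow>
     (\<forall>i. open (\<Omega> i) \<and> emeasure lebesgue (\<Omega> i) < \<infinity>) \<and>
     (\<forall>i. \<Omega> (Suc i) \<subseteq> \<Omega> i \<and>
          emeasure lebesgue (\<Omega> (Suc i)) \<le> ennreal (1/2) * emeasure lebesgue (\<Omega> i))"

end

theory Submission
  imports Defs
begin

theorem lemma2p3:
  fixes \<eta> :: real
  assumes "0 < \<eta>" and "\<eta> < 1"
  shows "\<exists>C::real. C > 0 \<and>
    (\<forall>(\<Omega> :: nat \<Rightarrow> (real \<times> real) set) (E :: nat \<Rightarrow> (real \<times> real) set) (A :: nat set).
       contracting \<Omega> \<longrightarrow>
       (\<forall>i. E i \<in> sets lebesgue \<and> E i \<subseteq> \<Omega> i \<and>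
            emeasure lebesgue (E i) \<ge> ennreal \<eta> * emeasure lebesgue (\<Omega> i)) \<longrightarrow>
       (\<Sum>i. if i \<in> A then emeasure lebesgue (E i) else 0)
         \<le> ennreal C * emeasure lebesgue (\<Union>i\<in>A. E i))"
proof (intro exI[of _ "2/\<eta>"] conjI allI impI)
  show "0 < 2 / \<eta>" using assms by simp
  fix \<Omega> E :: "nat \<Rightarrow> (real \<times> real) set" and A :: "nat set"
  assume c: "contracting \<Omega>"
  assume hE: "\<forall>i. E i \<in> sets lebesgue \<and> E i \<subseteq> \<Omega> i \<and>
            emeasure lebesgue (E i) \<ge> ennreal \<eta> * emeasure lebesgue (\<Omega> i)"
  let ?M = "emeasure lebesgue"
  let ?f = "\<lambda>i. if i \<in> A then ?M (E i) else 0"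
  show "(\<Sum>i. ?f i) \<le> ennreal (2/\<eta>) * ?M (\<Union>i\<in>A. E i)"
  proof (cases "A = {}")
    case True
    then show ?thesis by simp
  next
    case False
    define m where "m = Least (\<lambda>i. i \<in> A)"
    have mA: "m \<in> A" using False unfolding m_def by (metis LeastI_ex all_not_in_conv)
    have mle: "\<And>i. i \<in> A \<Longrightarrow> m \<le> i" unfolding m_def by (rule Least_le)
    have dec: "\<And>k. ?M (\<Omega> (m + k)) \<le> ennreal ((1/2)^k) * ?M (\<Omega> m)"
    proof -
      fix k show "?M (\<Omega> (m + k)) \<le> ennreal ((1/2)^k) * ?M (\<Omega> m)"
      proof (induction k)
        case 0 then show ?case by simp
      next
        case (Suc k)
        have "?M (\<Omega> (m + Suc k)) \<le> ennreal (1/2) * ?M (\<Omega> (m + k))"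
          using c unfolding contracting_def add_Suc_right by blast
        also have "\<dots> \<le> ennreal (1/2) * (ennreal ((1/2)^k) * ?M (\<Omega> m))"
          by (rule mult_left_mono[OF Suc]) simp
        also have "\<dots> = ennreal ((1/2)^Suc k) * ?M (\<Omega> m)"
        proof -
          have "ennreal (1/2) * ennreal ((1/2)^k) = ennreal ((1/2)^Suc k)"
            by (subst ennreal_mult[symmetric]) auto
          then show ?thesis by (metis mult.assoc)
        qed
        finally show ?case .
      qed
    qed
    have f0: "\<And>j. j < m \<Longrightarrow> ?f j = 0" using mle by force
    have "(\<Sum>i. ?f i) = (\<Sum>j. ?f (j + m)) + (\<Sum>j<m. ?f j)"
      by (rule suminf_offset) simp
    also have "(\<Sum>j<m. ?f j) = 0" using f0 by simp
    also have "(\<Sum>j. ?f (j + m)) \<le> (\<Sum>j. ennreal ((1/2)^j) * ?M (\<Omega> m))"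
    proof (rule suminf_le)
      fix j
      have "?f (j + m) \<le> ?M (E (j + m))" by simp
      also have "\<dots> \<le> ?M (\<Omega> (m + j))"
        using hE c unfolding contracting_def
        by (intro emeasure_mono) (auto simp: add.commute sets.sets_into_space)
      also have "\<dots> \<le> ennreal ((1/2)^j) * ?M (\<Omega> m)" by (rule dec)
      finally show "?f (j + m) \<le> ennreal ((1/2)^j) * ?M (\<Omega> m)" .
    qed simp_all
    also have "(\<Sum>j. ennreal ((1/2)^j) * ?M (\<Omega> m)) = ennreal 2 * ?M (\<Omega> m)"
    proof -
      have "(\<Sum>j. ennreal ((1/2::real)^j)) = ennreal 2"
        using geometric_sums[of "1/2::real"] by (intro suminf_ennreal_eq) auto
      then show ?thesis by (simp add: ennreal_suminf_multc)
    qed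
    also have "?M (\<Omega> m) = ennreal (1/\<eta>) * (ennreal \<eta> * ?M (\<Omega> m))"
      using assms by (simp flip: mult.assoc ennreal_mult)
    also have "ennreal \<eta> * ?M (\<Omega> m) \<le> ?M (E m)" using hE by blast
    also have "?M (E m) \<le> ?M (\<Union>i\<in>A. E i)"
      using hE mA by (intro emeasure_mono) auto
    finally have fin: "(\<Sum>i. ?f i) \<le> ennreal 2 * (ennreal (1/\<eta>) * ?M (\<Union>i\<in>A. E i))"
      by (simp add: mult_left_mono)
    have eq: "ennreal (2/\<eta>) = ennreal 2 * ennreal (1/\<eta>)"
      using assms by (subst ennreal_mult[symmetric]) auto
    show ?thesis using fin unfolding eq mult.assoc .
  qed
qed

end
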